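(* Let $M$ be a stable semigroup and let $\epsilon$ be the Zeiger encoding map on $\mathrm{Rh}(M^I)$. Let $\sigma,\tau\in\mathrm{Rh}(M^I)$ with $\sigma=(m_k<_{\mathcal L}\cdots<_{\mathcal L}m_0=I)$, $\sigma\tau=(m'_l<_{\mathcal L}\cdots<_{\mathcal L}m'_0=I)$, $\epsilon(\sigma)=(x_k,\dots,x_0)$ and $\epsilon(\sigma\tau)=(x'_l,\dots,x'_0)$, and assume $m_k\,\mathcal R\,m'_l$. Let $\sigma'=(m_{k+p}<_{\mathcal L}\cdots<_{\mathcal L}m_{k+1}<_{\mathcal L}m_k<_{\mathcal L}\cdots<_{\mathcal L}m_0)\in\mathrm{Rh}(M^I)$ with $p\ge0$, and write $\epsilon(\sigma')=(x_{k+p},\dots,x_{k+1},x_k,\dots,x_0)$. Then $$\epsilon(\sigma'\tau)=(x_{k+p},\dots,x_{k+1},x'_l,\dots,x'_1,x'_0).$$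
   Context: $M^I$ is $M$ with a new identity $I$ adjoined. $M$ is stable if $ax\,\mathcal J\,a\Rightarrow ax\,\mathcal R\,a$ and $xa\,\mathcal J\,a\Rightarrow xa\,\mathcal L\,a$. For each $\mathcal J$-class $J$ of $M^I$ fix a Rees matrix coordinatization $J^0=M^0(G,A,B,C)$ with distinguished $1\in A,B,G$, writing elements of $J$ as triples $(a,g,b)$; for $m=(a,g,b)$ fix $m^*,m^\#$ with $mm^*=(a,1,1)$, $(a,1,1)m^\#=m$, and $I^*=I^\#=I$. $\mathrm{Rh}(M^I)$ is the Rhodes expansion: chains $(m_k<_{\mathcal L}\cdots<_{\mathcal L}m_0=I)$ with product $\sigma\tau=\mathrm{lm}(m_kn\le_{\mathcal L}\cdots\le_{\mathcal L}m_1n\le_{\mathcal L}n=n_l<_{\mathcal L}\cdots<_{\mathcal L}n_0)$ for $\tau=(n_l<\cdots<n_0)$, $n=n_l$, where $\mathrm{lm}$ keeps the leftmost term of each $\mathcal L$-class block. The Zeiger encoding is $\epsilon(m_k<_{\mathcal L}\cdots<_{\mathcal L}m_0)=(x_k,\dots,x_0)$ with $x_0=I$, $x_i=m_im_{i-1}^*$. *)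

theory Defs
  imports Main "HOL-Algebra.Group"
begin

text \<open>M is the semigroup given by the type 'a (class semigroup_mult).
  M^I is modelled as 'a option, with None playing the role of the new identity I.\<close>

fun mI :: "'a::semigroup_mult option \<Rightarrow> 'a option \<Rightarrow> 'a option" where
  "mI None y = y"
| "mI (Some x) None = Some x"
| "mI (Some x) (Some y) = Some (x * y)"

abbreviation I_elem :: "'a option" where
  "I_elem \<equiv> None"

definition leR :: "'a::semigroup_mult option \<Rightarrow> 'a option \<Rightarrow> bool" where
  "leR x y \<longleftrightarrow> (\<exists>u. x = mI y u)"

definition leL :: "'a::semigroup_mult option \<Rightarrow> 'a option \<Rightarrow> bool" where
  "leL x y \<longleftrightarrow> (\<exists>u. x = mI u y)"

definition leJ :: "'a::semigroup_mult option \<Rightarrow> 'a option \<Rightarrow> bool" where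
  "leJ x y \<longleftrightarrow> (\<exists>u v. x = mI (mI u y) v)"

definition greenR :: "'a::semigroup_mult option \<Rightarrow> 'a option \<Rightarrow> bool" where
  "greenR x y \<longleftrightarrow> leR x y \<and> leR y x"

definition greenL :: "'a::semigroup_mult option \<Rightarrow> 'a option \<Rightarrow> bool" where
  "greenL x y \<longleftrightarrow> leL x y \<and> leL y x"

definition greenJ :: "'a::semigroup_mult option \<Rightarrow> 'a option \<Rightarrow> bool" where
  "greenJ x y \<longleftrightarrow> leJ x y \<and> leJ y x"

definition ltL :: "'a::semigroup_mult option \<Rightarrow> 'a option \<Rightarrow> bool" where
  "ltL x y \<longleftrightarrow> leL x y \<and> \<not> leL y x"

definition Jclass :: "'a::semigroup_mult option \<Rightarrow> 'a option set" where
  "Jclass m = {x. greenJ x m}"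

definition stable :: "'a::semigroup_mult itself \<Rightarrow> bool" where
  "stable _ \<longleftrightarrow>
     (\<forall>a x :: 'a. greenJ (Some (a * x)) (Some a) \<longrightarrow> greenR (Some (a * x)) (Some a)) \<and>
     (\<forall>a x :: 'a. greenJ (Some (x * a)) (Some a) \<longrightarrow> greenL (Some (x * a)) (Some a))"

text \<open>\<open>rees_coord J G A B C a1 b1 \<phi>\<close>: \<open>\<phi>\<close> identifies the J-class J with the
  set of nonzero elements A \<times> G \<times> B of the Rees matrix semigroup M^0(G,A,B,C)
  (sandwich matrix C : B \<times> A \<rightarrow> G \<union> {0}, with None = 0), so that J^0 \<cong> M^0(G,A,B,C);
  a1 \<in> A, b1 \<in> B are the distinguished indices "1", and the distinguished 1 \<in> G is
  the group identity.\<close>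

definition rees_coord ::
  "'a::semigroup_mult option set \<Rightarrow> 'g monoid \<Rightarrow> 'i set \<Rightarrow> 'i set \<Rightarrow> ('i \<Rightarrow> 'i \<Rightarrow> 'g option)
   \<Rightarrow> 'i \<Rightarrow> 'i \<Rightarrow> ('a option \<Rightarrow> 'i \<times> 'g \<times> 'i) \<Rightarrow> bool" where
  "rees_coord J G A B C a1 b1 \<phi> \<longleftrightarrow>
     group G \<and> a1 \<in> A \<and> b1 \<in> B \<and>
     bij_betw \<phi> J (A \<times> carrier G \<times> B) \<and>
     (\<forall>b\<in>B. \<forall>a\<in>A. \<forall>c. C b a = Some c \<longrightarrow> c \<in> carrier G) \<and>
     (\<forall>x\<in>J. \<forall>y\<in>J.
        (case \<phi> x of (a, g, b) \<Rightarrow> case \<phi> y of (a', g', b') \<Rightarrow>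
           (case C b a' of
              None \<Rightarrow> mI x y \<notin> J
            | Some c \<Rightarrow> mI x y \<in> J \<and> \<phi> (mI x y) = (a, g \<otimes>\<^bsub>G\<^esub> c \<otimes>\<^bsub>G\<^esub> g', b')))) \<and>
     (\<forall>x\<in>J. \<forall>y\<in>J. greenR x y \<longleftrightarrow> fst (\<phi> x) = fst (\<phi> y)) \<and>
     (\<forall>x\<in>J. \<forall>y\<in>J. greenL x y \<longleftrightarrow> snd (snd (\<phi> x)) = snd (snd (\<phi> y)))"

definition rees_elem ::
  "'a option set \<Rightarrow> 'g monoid \<Rightarrow> 'i \<Rightarrow> ('a option \<Rightarrow> 'i \<times> 'g \<times> 'i) \<Rightarrow> 'i \<Rightarrow> 'a option" where
  "rees_elem J G b1 \<phi> a = inv_into J \<phi> (a, \<one>\<^bsub>G\<^esub>, b1)"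

text \<open>A chain \<open>(m_k <_L \<dots> <_L m_0 = I)\<close> is represented by the list [m_k, ..., m_0].\<close>

definition rh_chain :: "'a::semigroup_mult option list \<Rightarrow> bool" where
  "rh_chain \<sigma> \<longleftrightarrow> \<sigma> \<noteq> [] \<and> last \<sigma> = None \<and>
     (\<forall>i. Suc i < length \<sigma> \<longrightarrow> ltL (\<sigma> ! i) (\<sigma> ! Suc i))"

text \<open>lm: keep the leftmost term of each block of L-equivalent consecutive terms.\<close>

fun lm :: "'a::semigroup_mult option list \<Rightarrow> 'a option list" where
  "lm [] = []"
| "lm [x] = [x]"
| "lm (x # y # xs) = (if greenL x y then lm (x # xs) else x # lm (y # xs))"

text \<open>Product in Rh(M^I): for \<sigma> = [m_k,...,m_0], \<tau> = [n_l,...,n_0], n = n_l,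
  \<sigma>\<tau> = lm [m_k n, ..., m_1 n, n_l, ..., n_0].\<close>

definition rh_mult :: "'a::semigroup_mult option list \<Rightarrow> 'a option list \<Rightarrow> 'a option list" where
  "rh_mult \<sigma> \<tau> = lm (map (\<lambda>m. mI m (hd \<tau>)) (butlast \<sigma>) @ \<tau>)"

text \<open>Zeiger encoding: [m_k,...,m_0] \<mapsto> [x_k,...,x_0], x_0 = I, x_i = m_i m_{i-1}^*.\<close>

definition zeiger ::
  "('a::semigroup_mult option \<Rightarrow> 'a option) \<Rightarrow> 'a option list \<Rightarrow> 'a option list" where
  "zeiger star \<sigma> = map (\<lambda>(a, b). mI a (star b)) (zip \<sigma> (tl \<sigma>)) @ [None]"

end

theory Submission imports Defs begin

lemma mI_assoc: "mI (mI x y) z = mI x (mI y z)"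
  by (cases x; cases y; cases z) (auto simp: mult.assoc)

lemma mI_None_right[simp]: "mI x None = x"
  by (cases x) auto

lemma leL_refl: "leL x x" unfolding leL_def by (rule exI[of _ None]) simp

lemma leL_trans: "leL x y \<Longrightarrow> leL y z \<Longrightarrow> leL x z"
  unfolding leL_def by (metis mI_assoc)

lemma leL_right: "leL a b \<Longrightarrow> leL (mI a c) (mI b c)"
  unfolding leL_def by (metis mI_assoc)

lemma greenJ_refl: "greenJ x x" unfolding greenJ_def leJ_def
  by (metis mI.simps(1) mI_None_right)

lemma leJ_trans: "leJ x y \<Longrightarrow> leJ y z \<Longrightarrow> leJ x z"
  unfolding leJ_def by (metis mI_assoc)

lemma greenR_J: "greenR x y \<Longrightarrow> greenJ x y"
  unfolding greenR_def leR_def greenJ_def leJ_def by (metis mI.simps(1))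

lemma Jclass_eq: "greenJ x y \<Longrightarrow> Jclass x = Jclass y"
  unfolding Jclass_def greenJ_def by (auto intro: leJ_trans)

lemma lm_ne: "xs \<noteq> [] \<Longrightarrow> lm xs \<noteq> [] \<and> hd (lm xs) = hd xs"
  by (induction xs rule: lm.induct) auto

lemma lm_append:
  assumes "Q \<noteq> []" "\<forall>i < length P. \<not> greenL (P!i) ((P@Q)!(Suc i))"
  shows "lm (P @ Q) = P @ lm Q"
  using assms
proof (induction P)
  case Nil then show ?case by simp
next
  case (Cons x P)
  have IH: "lm (P @ Q) = P @ lm Q"
  proof (rule Cons.IH)
    show "\<forall>i<length P. \<not> greenL (P ! i) ((P @ Q) ! Suc i)"
    proof (intro allI impI)
      fix i assume "i < length P"
      then show "\<not> greenL (P ! i) ((P @ Q) ! Suc i)"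
        using Cons.prems(2)[rule_format, of "Suc i"] by simp
    qed
  qed (use Cons.prems in auto)
  obtain y ys where yy: "P @ Q = y # ys" using Cons.prems(1) by (cases "P @ Q") auto
  have "\<not> greenL x y" using Cons.prems(2)[rule_format, of 0] yy by simp
  then show ?case using IH yy by simp
qed

lemma zeiger_append:
  assumes "Q \<noteq> []"
  shows "zeiger s (P @ Q) = map (\<lambda>(a, b). mI a (s b)) (zip P (take (length P) (tl (P @ Q)))) @ zeiger s Q"
proof -
  have "drop (length P) (tl (P @ Q)) = tl Q" by (simp add: drop_tl)
  then show ?thesis unfolding zeiger_def by (simp add: zip_append1)
qed

theorem theorem7p5:
  fixes G :: "'a::semigroup_mult option set \<Rightarrow> 'g monoid"
    and A B :: "'a option set \<Rightarrow> 'i set"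
    and C :: "'a option set \<Rightarrow> 'i \<Rightarrow> 'i \<Rightarrow> 'g option"
    and a1 b1 :: "'a option set \<Rightarrow> 'i"
    and \<phi> :: "'a option set \<Rightarrow> 'a option \<Rightarrow> 'i \<times> 'g \<times> 'i"
    and star sharp :: "'a option \<Rightarrow> 'a option"
    and \<sigma> \<tau> \<sigma>' :: "'a option list"
    and p :: nat
  assumes stab: "stable TYPE('a)"
    and coord: "\<And>m. rees_coord (Jclass m) (G (Jclass m)) (A (Jclass m)) (B (Jclass m))
                       (C (Jclass m)) (a1 (Jclass m)) (b1 (Jclass m)) (\<phi> (Jclass m))"
    and star: "\<And>m. mI m (star m) =
                 rees_elem (Jclass m) (G (Jclass m)) (b1 (Jclass m)) (\<phi> (Jclass m))
                   (fst (\<phi> (Jclass m) m))"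
    and sharp: "\<And>m. mI (rees_elem (Jclass m) (G (Jclass m)) (b1 (Jclass m)) (\<phi> (Jclass m))
                   (fst (\<phi> (Jclass m) m))) (sharp m) = m"
    and starI: "star None = None" and sharpI: "sharp None = None"
    and chain_\<sigma>: "rh_chain \<sigma>" and chain_\<tau>: "rh_chain \<tau>"
    and R: "greenR (hd \<sigma>) (hd (rh_mult \<sigma> \<tau>))"
    and chain_\<sigma>': "rh_chain \<sigma>'" and len: "length \<sigma>' = length \<sigma> + p"
    and ext: "drop p \<sigma>' = \<sigma>"
  shows "zeiger star (rh_mult \<sigma>' \<tau>) = take p (zeiger star \<sigma>') @ zeiger star (rh_mult \<sigma> \<tau>)"
proof -
  define S where "S = \<sigma>'"
  define n where "n = hd \<tau>"
  define f where "f = (\<lambda>x. mI x n)"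
  define h where "h = hd \<sigma>"
  have sne: "\<sigma> \<noteq> []" and tne: "\<tau> \<noteq> []" using chain_\<sigma> chain_\<tau> unfolding rh_chain_def by auto
  have Sdec: "S = take p S @ \<sigma>" using ext S_def by (metis append_take_drop_id)
  have lenS: "length S = length \<sigma> + p" using len S_def by simp
  have "drop p S ! 0 = S ! p" using lenS sne by (simp add: nth_drop)
  then have Sp: "S ! p = h" using ext S_def sne h_def by (simp add: hd_conv_nth)
  have ltS: "\<And>i. Suc i < length S \<Longrightarrow> ltL (S ! i) (S ! Suc i)"
    using chain_\<sigma>' S_def unfolding rh_chain_def by auto
  have ltSp: "ltL (S ! i) (S ! Suc i)" if "i < p" for i
  proof -
    have "length \<sigma> > 0" using sne by simp
    then have "Suc i < length S" using that lenS by linarith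
    then show ?thesis by (rule ltS)
  qed
  define rest where "rest = map f (butlast \<sigma>) @ \<tau>"
  have hdrest: "hd rest = f h"
  proof (cases "butlast \<sigma> = []")
    case True
    then have "\<sigma> = [h]" using sne h_def by (cases \<sigma> rule: rev_cases) auto
    then have "h = None" using chain_\<sigma> unfolding rh_chain_def by simp
    then show ?thesis using True unfolding rest_def f_def n_def by simp
  next
    case False
    then have "hd (butlast \<sigma>) = hd \<sigma>" by (cases \<sigma>) (auto split: if_splits)
    then show ?thesis unfolding rest_def h_def using False by (simp add: hd_map)
  qed
  have restne: "rest \<noteq> []" using tne rest_def by simp
  define Q where "Q = lm rest"
  have Qne: "Q \<noteq> []" and hdQ: "hd Q = f h" using lm_ne[OF restne] hdrest Q_def by auto
  have Q_eq: "rh_mult \<sigma> \<tau> = Q" unfolding rh_mult_def Q_def rest_def f_def n_def by simp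
  obtain v where v: "h = mI (f h) v" using R Q_eq hdQ unfolding greenR_def leR_def h_def by auto
  have leLh: "leL (S ! i) h" if "i \<le> p" for i
    using that
  proof (induction "p - i" arbitrary: i)
    case 0 then have "i = p" by simp
    then show ?case using Sp leL_refl by simp
  next
    case (Suc d)
    then have 1: "leL (S ! Suc i) h" using Suc.hyps(1)[of "Suc i"] by simp
    have "Suc i < length S" using Suc.hyps(2) lenS sne by (cases \<sigma>) auto
    then have "leL (S ! i) (S ! Suc i)" using ltS[of i] unfolding ltL_def by simp
    with 1 show ?case using leL_trans by blast
  qed
  have fback: "mI (f (S ! i)) v = S ! i" if ip: "i \<le> p" for i
  proof -
    obtain w where w: "S ! i = mI w h" using leLh[OF ip] unfolding leL_def by auto
    have "mI (f (S ! i)) v = mI w (mI (f h) v)" unfolding f_def w by (simp add: mI_assoc)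
    then show ?thesis using v w by simp
  qed
  have Rf: "greenR (f (S ! i)) (S ! i)" if "i \<le> p" for i
    unfolding greenR_def leR_def using fback[OF that] f_def by metis
  have starR: "mI x (star x) = mI y (star y)" if "greenR x y" for x y
  proof -
    have J: "Jclass x = Jclass y" using Jclass_eq[OF greenR_J[OF that]] .
    have xin: "x \<in> Jclass x" and yin: "y \<in> Jclass x" using J greenJ_refl unfolding Jclass_def by auto
    have "fst (\<phi> (Jclass x) x) = fst (\<phi> (Jclass x) y)"
      using coord[of x] xin yin that unfolding rees_coord_def by blast
    then show ?thesis using star[of x] star[of y] J by simp
  qed
  define P where "P = map f (take p S)"
  have lenP: "length P = p" using P_def lenS by simp
  have PQnth: "(P @ rest) ! Suc i = f (S ! Suc i)" "(P @ Q) ! Suc i = f (S ! Suc i)" if "i < p" for i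
  proof -
    have "Suc i < p \<or> Suc i = p" using that by auto
    then show "(P @ rest) ! Suc i = f (S ! Suc i)" "(P @ Q) ! Suc i = f (S ! Suc i)"
      using hdrest hdQ Sp restne Qne lenP unfolding P_def
      by (auto simp: nth_append hd_conv_nth)
  qed
  have bS: "butlast S = take p S @ butlast \<sigma>" using Sdec sne by (metis butlast_append)
  have nL: "\<not> greenL (f (S ! i)) (f (S ! Suc i))" if "i < p" for i
  proof
    assume "greenL (f (S ! i)) (f (S ! Suc i))"
    then have "leL (mI (f (S ! Suc i)) v) (mI (f (S ! i)) v)" unfolding greenL_def using leL_right by blast
    then have "leL (S ! Suc i) (S ! i)" using fback that by simp
    moreover have "ltL (S ! i) (S ! Suc i)" using ltSp[OF that] .
    ultimately show False unfolding ltL_def by simp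
  qed
  have main: "rh_mult \<sigma>' \<tau> = P @ Q"
  proof -
    have "rh_mult \<sigma>' \<tau> = lm (P @ rest)" unfolding rh_mult_def S_def[symmetric] bS P_def rest_def f_def n_def by simp
    also have "\<dots> = P @ Q" unfolding Q_def
      by (rule lm_append[OF restne]) (use nL PQnth lenP P_def lenS in auto)
    finally show ?thesis .
  qed
  have "take p (zeiger star \<sigma>') = map (\<lambda>(a, b). mI a (star b)) (zip P (take (length P) (tl (P @ Q))))"
  proof (rule nth_equalityI)
    show "length (take p (zeiger star \<sigma>')) = length (map (\<lambda>(a, b). mI a (star b)) (zip P (take (length P) (tl (P @ Q)))))"
    proof -
      have "0 < length \<sigma>" "0 < length Q" using sne Qne by auto
      have "length (zeiger star \<sigma>') = length \<sigma>'" using lenS S_def \<open>0 < length \<sigma>\<close> by (simp add: zeiger_def)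
      then have a: "length (take p (zeiger star \<sigma>')) = p" using lenS S_def by simp
      have "length (tl (P @ Q)) \<ge> p" using lenP \<open>0 < length Q\<close> by (simp del: length_greater_0_conv)
      then have b: "length (map (\<lambda>(a, b). mI a (star b)) (zip P (take (length P) (tl (P @ Q))))) = p"
        using lenP by simp
      show ?thesis using a b by simp
    qed
  next
    fix i assume "i < length (take p (zeiger star \<sigma>'))"
    then have ip: "i < p" using lenS S_def by (simp add: zeiger_def)
    have L: "take p (zeiger star \<sigma>') ! i = mI (S ! i) (star (S ! Suc i))"
    proof -
      have "0 < length \<sigma>" using sne by simp
      then have "i < length \<sigma>' - 1" using ip len by linarith
      then show ?thesis using ip S_def by (simp add: zeiger_def nth_append nth_tl)
    qed
    have Rr: "map (\<lambda>(a, b). mI a (star b)) (zip P (take (length P) (tl (P @ Q)))) ! i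
        = mI (f (S ! i)) (star (f (S ! Suc i)))"
    proof -
      have lt: "i < length (tl (P @ Q))" using ip lenP Qne by (cases Q) auto
      have "take (length P) (tl (P @ Q)) ! i = (P @ Q) ! Suc i"
        using ip lenP lt by (simp add: nth_tl)
      moreover have "P ! i = f (S ! i)" using ip lenS unfolding P_def by simp
      ultimately show ?thesis using ip lenP lt PQnth(2)[OF ip] by simp
    qed
    obtain u where u: "S ! i = mI u (S ! Suc i)" using ltSp[OF ip] unfolding ltL_def leL_def by auto
    have "mI (f (S ! i)) (star (f (S ! Suc i))) = mI u (mI (f (S ! Suc i)) (star (f (S ! Suc i))))"
      unfolding f_def u by (simp add: mI_assoc)
    also have "\<dots> = mI u (mI (S ! Suc i) (star (S ! Suc i)))" using starR[OF Rf[of "Suc i"]] ip by simp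
    also have "\<dots> = mI (S ! i) (star (S ! Suc i))" using u by (simp add: mI_assoc)
    finally show "take p (zeiger star \<sigma>') ! i = map (\<lambda>(a, b). mI a (star b)) (zip P (take (length P) (tl (P @ Q)))) ! i"
      using L Rr by simp
  qed
  then show ?thesis using main zeiger_append[OF Qne, of star P] Q_eq by simp
qed

end
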